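(* Let $d\ge 1$ be an integer and let $n$ be a positive integer that has no prime divisor less than $2^d$. Then $n^{d-1}$ queens can be placed on $\mathbb{Z}_n^d$ without conflict.
   Context: A queen on $\mathbb{Z}_n^d$ can move any number of times by a vector $\mathbf{x}\in\{-1,0,1\}^d\setminus\{\mathbf{0}\}$ (coordinates modulo $n$). Queens occupy distinct fields; two queens at distinct fields $\mathbf{u},\mathbf{v}\in\mathbb{Z}_n^d$ are in conflict if $\mathbf{v}-\mathbf{u}=t\mathbf{x}$ for some $t\in\mathbb{Z}_n$ and some nonzero $\mathbf{x}\in\{-1,0,1\}^d$. A placement is without conflict if no two queens are in conflict. *)

theory Defs
  imports Main "HOL-Number_Theory.Cong"
begin

text \<open>Fields of Z_n^d: integer lists of length d with entries in {0..n-1}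
  (canonical representatives of residues mod n).\<close>
definition fields :: "nat \<Rightarrow> nat \<Rightarrow> int list set" where
  "fields n d = {u. length u = d \<and> (\<forall>i<d. 0 \<le> u ! i \<and> u ! i < int n)}"

definition directions :: "nat \<Rightarrow> int list set" where
  "directions d = {x. length x = d \<and> set x \<subseteq> {-1, 0, 1} \<and> (\<exists>i<d. x ! i \<noteq> 0)}"

definition in_conflict :: "nat \<Rightarrow> nat \<Rightarrow> int list \<Rightarrow> int list \<Rightarrow> bool" where
  "in_conflict n d u v \<longleftrightarrow> u \<noteq> v \<and>
     (\<exists>t::int. \<exists>x\<in>directions d. \<forall>i<d. [v ! i - u ! i = t * x ! i] (mod int n))"

definition conflict_free :: "nat \<Rightarrow> nat \<Rightarrow> int list set \<Rightarrow> bool" where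
  "conflict_free n d Q \<longleftrightarrow> Q \<subseteq> fields n d \<and> (\<forall>u\<in>Q. \<forall>v\<in>Q. \<not> in_conflict n d u v)"

end

theory Submission
  imports Defs
begin

lemma pow2_sum_bound:
  fixes z :: "nat \<Rightarrow> int"
  assumes "\<And>i. \<bar>z i\<bar> \<le> 1"
  shows "\<bar>\<Sum>i<k. 2^i * z i\<bar> \<le> 2^k - 1 \<and> ((\<exists>i<k. z i \<noteq> 0) \<longrightarrow> (\<Sum>i<k. 2^i * z i) \<noteq> 0)"
proof (induction k)
  case 0
  then show ?case by simp
next
  case (Suc k)
  have zk: "\<bar>2^k * z k\<bar> \<le> 2^k" using assms[of k]
    by (simp add: abs_mult)
  have b: "\<bar>\<Sum>i<Suc k. 2^i * z i\<bar> \<le> 2^Suc k - 1"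
  proof -
    have "\<bar>(\<Sum>i<k. 2^i * z i) + 2^k * z k\<bar> \<le> \<bar>\<Sum>i<k. 2^i * z i\<bar> + \<bar>2^k * z k\<bar>"
      by (rule abs_triangle_ineq)
    moreover have "(2::int)^Suc k = 2 * 2^k" by simp
    ultimately show ?thesis using Suc.IH zk by simp
  qed
  have nz: "(\<Sum>i<Suc k. 2^i * z i) \<noteq> 0" if "\<exists>i<Suc k. z i \<noteq> 0"
  proof (cases "z k = 0")
    case True
    then have "\<exists>i<k. z i \<noteq> 0" using that less_Suc_eq by auto
    then show ?thesis using Suc.IH True by simp
  next
    case False
    then have "\<bar>z k\<bar> = 1" using assms[of k] by linarith
    then have "\<bar>2^k * z k\<bar> = 2^k" by (simp add: abs_mult)
    then show ?thesis using Suc.IH by auto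
  qed
  show ?case using b nz by blast
qed

lemma coprime_small:
  fixes c :: int and n d :: nat
  assumes "c \<noteq> 0" "\<bar>c\<bar> < 2^d"
    and "\<forall>p::nat. prime p \<and> p dvd n \<longrightarrow> p \<ge> 2 ^ d"
  shows "coprime c (int n)"
proof -
  define a where "a = nat \<bar>c\<bar>"
  have a0: "a > 0" and alt: "a < 2^d" using assms(1,2) unfolding a_def by auto
  have "gcd a n = 1"
  proof (rule ccontr)
    assume "gcd a n \<noteq> 1"
    then obtain p where p: "prime p" "p dvd gcd a n" using prime_factor_nat by blast
    then have "p dvd n" "p dvd a" by auto
    then have "p \<le> a" using a0 dvd_imp_le by blast
    moreover have "2^d \<le> p" using assms(3) p(1) \<open>p dvd n\<close> by blast
    ultimately show False using alt by linarith
  qed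
  then have "coprime a n" by (simp add: coprime_iff_gcd_eq_1)
  then have "coprime (int a) (int n)" by simp
  moreover have "int a = \<bar>c\<bar>" unfolding a_def by simp
  ultimately show ?thesis by simp
qed

definition sv :: "nat \<Rightarrow> int list \<Rightarrow> int" where
  "sv m y = (\<Sum>i<m. 2^(i+1) * y ! i)"

definition emb :: "nat \<Rightarrow> nat \<Rightarrow> int list \<Rightarrow> int list" where
  "emb n m y = (sv m y mod int n) # y"

theorem mainTheorem7:
  fixes n d :: nat
  assumes "d \<ge> 1" and "n > 0"
    and "\<forall>p::nat. prime p \<and> p dvd n \<longrightarrow> p \<ge> 2 ^ d"
  shows "\<exists>Q. conflict_free n d Q \<and> card Q = n ^ (d - 1)"
proof -
  obtain m where dm: "d = Suc m" using assms(1) by (cases d) auto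
  define Q where "Q = emb n m ` fields n m"
  have F: "fields n m = {xs. set xs \<subseteq> {0..<int n} \<and> length xs = m}"
    unfolding fields_def by (auto simp: in_set_conv_nth) (metis atLeastLessThan_iff nth_mem subsetD)+
  have cardF: "card (fields n m) = n ^ m"
    unfolding F by (simp add: card_lists_length_eq)
  have inj: "inj_on (emb n m) (fields n m)"
    by (rule inj_onI) (simp add: emb_def)
  have cardQ: "card Q = n ^ (d - 1)"
    unfolding Q_def using card_image[OF inj] cardF dm by simp
  have sub: "Q \<subseteq> fields n d"
  proof
    fix u assume "u \<in> Q"
    then obtain y where y: "y \<in> fields n m" "u = emb n m y" unfolding Q_def by auto
    have L: "length u = d" using y dm by (simp add: emb_def fields_def)
    have R: "\<forall>i<d. 0 \<le> u ! i \<and> u ! i < int n"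
    proof (intro allI impI)
      fix i assume "i < d"
      show "0 \<le> u ! i \<and> u ! i < int n"
      proof (cases i)
        case 0 then show ?thesis using y assms(2) by (simp add: emb_def)
      next
        case (Suc j) then show ?thesis using y \<open>i < d\<close> dm by (simp add: emb_def fields_def)
      qed
    qed
    show "u \<in> fields n d" using L R by (simp add: fields_def)
  qed
  have nc: "\<not> in_conflict n d u v" if uQ: "u \<in> Q" and vQ: "v \<in> Q" for u v
  proof
    assume "in_conflict n d u v"
    then obtain t x where neq: "u \<noteq> v" and x: "x \<in> directions d"
      and cg: "\<forall>i<d. [v ! i - u ! i = t * x ! i] (mod int n)"
      unfolding in_conflict_def by blast
    obtain y where y: "y \<in> fields n m" "u = emb n m y" using uQ unfolding Q_def by auto
    obtain y' where y': "y' \<in> fields n m" "v = emb n m y'" using vQ unfolding Q_def by auto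
    have c0: "[sv m y' - sv m y = t * x ! 0] (mod int n)"
    proof -
      have h1: "[sv m y' - sv m y = sv m y' mod int n - sv m y mod int n] (mod int n)"
        by (intro cong_diff) (simp_all add: cong_def)
      have h2: "[v ! 0 - u ! 0 = t * x ! 0] (mod int n)" using cg dm by blast
      have e: "v ! 0 - u ! 0 = sv m y' mod int n - sv m y mod int n" using y y' by (simp add: emb_def)
      show ?thesis using cong_trans[OF h1 h2[unfolded e]] .
    qed
    have ci: "[y' ! i - y ! i = t * x ! (i+1)] (mod int n)" if "i < m" for i
      using cg[rule_format, of "Suc i"] that dm y y' by (simp add: emb_def)
    have "sv m y' - sv m y = (\<Sum>i<m. 2^(i+1) * (y' ! i - y ! i))"
      unfolding sv_def by (simp add: sum_subtractf right_diff_distrib)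
    also have "[\<dots> = (\<Sum>i<m. 2^(i+1) * (t * x ! (i+1)))] (mod int n)"
      by (intro cong_sum cong_mult cong_refl ci) simp
    also have "(\<Sum>i<m. 2^(i+1) * (t * x ! (i+1))) = t * (\<Sum>i<m. 2^(i+1) * x ! (i+1))"
      by (simp add: sum_distrib_left algebra_simps)
    finally have "[t * x ! 0 = t * (\<Sum>i<m. 2^(i+1) * x ! (i+1))] (mod int n)"
      using c0 cong_sym cong_trans by blast
    then have "[t * (x ! 0 - (\<Sum>i<m. 2^(i+1) * x ! (i+1))) = 0] (mod int n)"
      by (simp add: cong_iff_dvd_diff right_diff_distrib)
    define z where "z i = (if i = 0 then x ! 0 else if i < d then - (x ! i) else 0)" for i
    have cz: "x ! 0 - (\<Sum>i<m. 2^(i+1) * x ! (i+1)) = (\<Sum>i<d. 2^i * z i)"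
    proof -
      have "(\<Sum>i<m. 2^Suc i * z (Suc i)) = (\<Sum>i<m. -(2^(i+1)*x!(i+1)))"
        by (rule sum.cong) (auto simp: z_def dm)
      moreover have "(\<Sum>i<d. 2^i * z i) = 2^0 * z 0 + (\<Sum>i<m. 2^Suc i * z (Suc i))"
        unfolding dm by (rule sum.lessThan_Suc_shift)
      moreover have "2^0 * z 0 = x ! 0" by (simp add: z_def)
      moreover have "(\<Sum>i<m. -(2^(i+1)*x!(i+1))) = - (\<Sum>i<m. 2^(i+1)*x!(i+1))"
        by (rule sum_negf)
      ultimately show ?thesis by linarith
    qed
    have xd: "length x = d" "set x \<subseteq> {-1,0,1}" "\<exists>i<d. x ! i \<noteq> 0"
      using x unfolding directions_def by auto
    have zb: "\<bar>z i\<bar> \<le> 1" for i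
    proof (cases "i < d")
      case True
      then have "x ! i \<in> {-1,0,1}" using xd nth_mem by blast
      then show ?thesis unfolding z_def by auto
    next
      case False
      then have "i \<noteq> 0" using dm by auto
      then show ?thesis unfolding z_def using False by simp
    qed
    obtain i0 where i0: "i0 < d" "x ! i0 \<noteq> 0" using xd(3) by blast
    have "z i0 \<noteq> 0" using i0 by (cases "i0 = 0") (simp_all add: z_def)
    then have ex: "\<exists>i<d. z i \<noteq> 0" using i0 by blast
    have pb: "\<bar>\<Sum>i<d. 2^i * z i\<bar> \<le> 2^d - 1 \<and> ((\<exists>i<d. z i \<noteq> 0) \<longrightarrow> (\<Sum>i<d. 2^i * z i) \<noteq> 0)"
      by (rule pow2_sum_bound[of z d, OF zb])
    have cnz: "(\<Sum>i<d. 2^i * z i) \<noteq> 0" using pb ex by blast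
    have cb: "\<bar>\<Sum>i<d. 2^i * z i\<bar> < 2^d" using pb by linarith
    have cop: "coprime (\<Sum>i<d. 2^i * z i) (int n)"
      by (rule coprime_small[OF cnz cb assms(3)])
    have "[t * (\<Sum>i<d. 2^i * z i) = 0 * (\<Sum>i<d. 2^i * z i)] (mod int n)"
      using \<open>[t * _ = 0] (mod int n)\<close> cz by simp
    then have t0: "[t = 0] (mod int n)" using cong_mult_rcancel[OF cop] by blast
    have uf: "u \<in> fields n d" "v \<in> fields n d" using sub uQ vQ by auto
    have "u = v"
    proof (rule nth_equalityI)
      show "length u = length v" using uf by (simp add: fields_def)
      fix i assume "i < length u"
      then have i: "i < d" using uf by (simp add: fields_def)
      have "[t * x ! i = 0 * x ! i] (mod int n)" using t0 by (intro cong_mult cong_refl)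
      then have "[t * x ! i = 0] (mod int n)" by simp
      moreover have "[v ! i - u ! i = t * x ! i] (mod int n)" using cg i by blast
      ultimately have "[v ! i - u ! i = 0] (mod int n)" by (rule cong_trans[rotated])
      then have "[v ! i = u ! i] (mod int n)" by (simp add: cong_iff_dvd_diff)
      moreover have "0 \<le> u ! i" "u ! i < int n" "0 \<le> v ! i" "v ! i < int n"
        using uf i by (auto simp: fields_def)
      ultimately show "u ! i = v ! i" by (simp add: cong_def)
    qed
    then show False using neq by simp
  qed
  have "conflict_free n d Q" unfolding conflict_free_def using sub nc by blast
  then show ?thesis using cardQ by blast
qed

end
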